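(* Let $n\ge3$, $1\le j\le n-2$ and $K\in\mathcal K^n$. For $z\in\{\pm e_n\}$, one has $z\in\operatorname{ext}(K[j],B_L^{n-1}[n-1-j])$ if and only if $\dim TS(K,z)\ge j$. For $z\in\mathbb S^{n-1}\setminus\{\pm e_n\}$, one has $z\in\operatorname{ext}(K[j],B_L^{n-1}[n-1-j])$ if and only if $\dim TS(K,z)\ge j$ and $TS(K,z)\not\subseteq L$.
   Context: $\mathcal K^n$ is the set of convex bodies in $\mathbb R^n$; $L=e_n^\perp$, $B_L^{n-1}=B^n\cap L$; $K[m]$ means $K$ repeated $m$ times. For $K\in\mathcal K^n$, $z\ne o$: $F(K,z)=\{x\in K:\langle x,z\rangle=h_K(z)\}$; $N(K,x)=\{u:\langle x,u\rangle=h_K(u)\}$ is the normal cone at $x\in\partial K$, and $N(K,F)=N(K,x)$ for $x$ in the relative interior of a nonempty convex $F\subseteq K$. The touching cone $T(K,z)$ is the unique face of $N(K,F(K,z))$ containing $z$ in its relative interior, and the touching space is $TS(K,z)=T(K,z)^\perp$ (orthogonal complement of its linear span). For $K_1,\dots,K_{n-1}\in\mathcal K^n$, $z\in\mathbb S^{n-1}$ is $(K_1,\dots,K_{n-1})$-extreme if there are linear hyperplanes $E_i\supseteq T(K_i,z)$ with $\dim(E_1\cap\dots\cap E_{n-1})=1$; $\operatorname{ext}(K_1,\dots,K_{n-1})$ is the set of such $z$. *)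

theory Defs
  imports "HOL-Analysis.Analysis"
begin

definition convex_body :: "'a::euclidean_space set \<Rightarrow> bool" where
  "convex_body K \<longleftrightarrow> K \<noteq> {} \<and> compact K \<and> convex K"

definition supp :: "'a::euclidean_space set \<Rightarrow> 'a \<Rightarrow> real" where
  "supp K u = (SUP x\<in>K. x \<bullet> u)"

definition supp_set :: "'a::euclidean_space set \<Rightarrow> 'a \<Rightarrow> 'a set" where
  "supp_set K z = {x \<in> K. x \<bullet> z = supp K z}"

definition normal_cone :: "'a::euclidean_space set \<Rightarrow> 'a \<Rightarrow> 'a set" where
  "normal_cone K x = {u. x \<bullet> u = supp K u}"

definition normal_cone_set :: "'a::euclidean_space set \<Rightarrow> 'a set \<Rightarrow> 'a set" where
  "normal_cone_set K F = normal_cone K (SOME x. x \<in> rel_interior F)"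

definition touching_cone :: "'a::euclidean_space set \<Rightarrow> 'a \<Rightarrow> 'a set" where
  "touching_cone K z = (THE G. G face_of normal_cone_set K (supp_set K z) \<and> z \<in> rel_interior G)"

definition touching_space :: "'a::euclidean_space set \<Rightarrow> 'a \<Rightarrow> 'a set" where
  "touching_space K z = orthogonal_comp (span (touching_cone K z))"

definition lin_hyperplane :: "'a::euclidean_space set \<Rightarrow> bool" where
  "lin_hyperplane E \<longleftrightarrow> (\<exists>a. a \<noteq> 0 \<and> E = {x. a \<bullet> x = 0})"

definition ext_dirs :: "'a::euclidean_space set list \<Rightarrow> 'a set" where
  "ext_dirs Ks = {z. norm z = 1 \<and>
     (\<exists>E::nat \<Rightarrow> 'a set. (\<forall>i<length Ks. lin_hyperplane (E i) \<and> touching_cone (Ks ! i) z \<subseteq> E i)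
        \<and> dim (\<Inter>i\<in>{..<length Ks}. E i) = 1)}"

end

theory Submission
  imports Defs
begin


lemma face_exists:
  fixes S :: "'a::euclidean_space set"
  assumes "convex S" "x \<in> S"
  shows "\<exists>G. G face_of S \<and> x \<in> rel_interior G"
  using assms
proof (induct S rule: measure_induct_rule[of "\<lambda>S. nat (aff_dim S + 1)"])
  case (less S)
  show ?case
  proof (cases "x \<in> rel_interior S")
    case True
    then show ?thesis using face_of_refl less.prems by blast
  next
    case False
    obtain a where "a \<noteq> 0" and le: "\<And>y. y \<in> S \<Longrightarrow> a \<bullet> x \<le> a \<bullet> y"
      and lt: "\<And>y. y \<in> rel_interior S \<Longrightarrow> a \<bullet> x < a \<bullet> y"
      using supporting_hyperplane_rel_boundary[OF less.prems False] by blast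
    define F where "F = S \<inter> {y. a \<bullet> y = a \<bullet> x}"
    have F: "F face_of S" unfolding F_def
      by (rule face_of_Int_supporting_hyperplane_ge) (use less.prems le in auto)
    have "rel_interior S \<noteq> {}" using rel_interior_eq_empty less.prems by blast
    then obtain y where "y \<in> rel_interior S" by blast
    then have "y \<in> S" "y \<notin> F" using lt[of y] rel_interior_subset unfolding F_def by auto
    then have "F \<noteq> S" by blast
    then have "aff_dim F < aff_dim S" using face_of_aff_dim_lt F less.prems by blast
    moreover have "x \<in> F" using F_def less.prems by auto
    moreover have "aff_dim F \<ge> 0" using \<open>x \<in> F\<close> aff_dim_negative_iff[of F] by (metis empty_iff not_less)
    ultimately have "nat (aff_dim F + 1) < nat (aff_dim S + 1)" by linarith
    then obtain G where "G face_of F" "x \<in> rel_interior G"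
      using less.hyps[of F] \<open>x \<in> F\<close> face_of_imp_convex[OF F] by blast
    then show ?thesis using face_of_trans F by blast
  qed
qed

lemma the_face:
  fixes N :: "'a::euclidean_space set"
  assumes "G face_of N" "z \<in> rel_interior G"
  shows "(THE G. G face_of N \<and> z \<in> rel_interior G) = G"
  using assms by (intro the_equality) (auto dest: face_of_eq[of G N])

lemma supp_bdd:
  assumes "compact K"
  shows "bdd_above ((\<lambda>x. x \<bullet> u) ` K)"
proof -
  have "compact ((\<lambda>x. x \<bullet> u) ` K)"
    by (rule compact_continuous_image) (auto intro: continuous_intros assms)
  then show ?thesis by (simp add: bounded_imp_bdd_above compact_imp_bounded)
qed

lemma supp_upper: "compact K \<Longrightarrow> x \<in> K \<Longrightarrow> x \<bullet> u \<le> supp K u"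
  unfolding supp_def by (rule cSUP_upper) (auto intro: supp_bdd)

lemma supp_least: "K \<noteq> {} \<Longrightarrow> (\<And>x. x \<in> K \<Longrightarrow> x \<bullet> u \<le> M) \<Longrightarrow> supp K u \<le> M"
  unfolding supp_def by (rule cSUP_least) auto

lemma supp_attained:
  assumes "convex_body K"
  shows "\<exists>x\<in>K. x \<bullet> u = supp K u"
proof -
  have "compact ((\<lambda>x. x \<bullet> u) ` K)" using assms unfolding convex_body_def
    by (intro compact_continuous_image) (auto intro: continuous_intros)
  moreover have "(\<lambda>x. x \<bullet> u) ` K \<noteq> {}" using assms convex_body_def by auto
  ultimately obtain s where "s \<in> (\<lambda>x. x \<bullet> u) ` K" "\<forall>t\<in>(\<lambda>x. x \<bullet> u) ` K. t \<le> s"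
    using compact_attains_sup by blast
  then obtain x where "x \<in> K" "\<And>y. y \<in> K \<Longrightarrow> y \<bullet> u \<le> x \<bullet> u" by auto
  then show ?thesis using assms unfolding convex_body_def
    by (intro bexI[of _ x]) (auto intro!: antisym supp_upper supp_least)
qed

lemma generic:
  fixes K :: "'a::euclidean_space set" and z :: 'a
  assumes "convex_body K"
  defines "x0 \<equiv> SOME x. x \<in> rel_interior (supp_set K z)"
  shows "x0 \<in> rel_interior (supp_set K z)" "x0 \<in> K" "x0 \<bullet> z = supp K z"
    "normal_cone_set K (supp_set K z) = normal_cone K x0"
    "touching_cone K z face_of normal_cone K x0" "z \<in> rel_interior (touching_cone K z)"
proof -
  have cK: "compact K" "convex K" "K \<noteq> {}" using assms(1) convex_body_def by auto
  have "supp_set K z \<noteq> {}" using supp_attained[OF assms(1), of z] unfolding supp_set_def by auto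
  moreover have "convex (supp_set K z)" unfolding supp_set_def
    using convex_Int[OF cK(2) convex_hyperplane[of z "supp K z"]]
    by (simp add: Int_def inner_commute)
  ultimately have "rel_interior (supp_set K z) \<noteq> {}" using rel_interior_eq_empty by blast
  then show x0: "x0 \<in> rel_interior (supp_set K z)" unfolding x0_def by (metis ex_in_conv someI_ex)
  then have "x0 \<in> supp_set K z" using rel_interior_subset by blast
  then show "x0 \<in> K" "x0 \<bullet> z = supp K z" unfolding supp_set_def by auto
  show nc: "normal_cone_set K (supp_set K z) = normal_cone K x0"
    unfolding normal_cone_set_def x0_def ..
  have zN: "z \<in> normal_cone K x0" unfolding normal_cone_def using \<open>x0 \<bullet> z = supp K z\<close> by simp
  have "convex (normal_cone K x0)"
  proof (rule convexI)
    fix u v :: 'a and a b :: real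
    assume uN: "u \<in> normal_cone K x0" and vN: "v \<in> normal_cone K x0" and ab: "0 \<le> a" "0 \<le> b" "a + b = 1"
    have u: "x0 \<bullet> u = supp K u" and v: "x0 \<bullet> v = supp K v" using uN vN normal_cone_def by auto
    have "supp K (a *\<^sub>R u + b *\<^sub>R v) \<le> a * supp K u + b * supp K v"
    proof (rule supp_least[OF cK(3)])
      fix x assume "x \<in> K"
      then have "x \<bullet> u \<le> supp K u" "x \<bullet> v \<le> supp K v" using supp_upper cK by auto
      then show "x \<bullet> (a *\<^sub>R u + b *\<^sub>R v) \<le> a * supp K u + b * supp K v"
        using ab by (simp add: inner_add_right add_mono mult_left_mono)
    qed
    moreover have "x0 \<bullet> (a *\<^sub>R u + b *\<^sub>R v) \<le> supp K (a *\<^sub>R u + b *\<^sub>R v)"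
      using supp_upper cK \<open>x0 \<in> K\<close> by auto
    ultimately have "x0 \<bullet> (a *\<^sub>R u + b *\<^sub>R v) = supp K (a *\<^sub>R u + b *\<^sub>R v)"
      using u v by (simp add: inner_add_right)
    then show "a *\<^sub>R u + b *\<^sub>R v \<in> normal_cone K x0" unfolding normal_cone_def by simp
  qed
  then obtain G where G: "G face_of normal_cone K x0" "z \<in> rel_interior G"
    using face_exists zN by blast
  have "touching_cone K z = G" unfolding touching_cone_def nc using the_face[OF G] .
  then show "touching_cone K z face_of normal_cone K x0" "z \<in> rel_interior (touching_cone K z)"
    using G by auto
qed



lemma TS_orth:
  assumes "convex_body K"
  shows "touching_space K z \<subseteq> {w. w \<bullet> z = 0}"
proof -
  have "z \<in> span (touching_cone K z)"
    using generic(6)[OF assms, of z] rel_interior_subset span_superset by blast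
  then show ?thesis unfolding touching_space_def orthogonal_comp_def orthogonal_def
    by (auto simp: inner_commute)
qed

lemma BL_body:
  fixes e :: "'a::euclidean_space"
  shows "convex_body (cball 0 1 \<inter> {x. x \<bullet> e = 0})"
  unfolding convex_body_def
proof (intro conjI)
  show "cball 0 1 \<inter> {x. x \<bullet> e = 0} \<noteq> {}" proof -
    have "(0::'a) \<in> cball 0 1 \<inter> {x. x \<bullet> e = 0}" by simp
    then show ?thesis by blast
  qed
  have "closed {x::'a. x \<bullet> e = 0}" using closed_hyperplane[of e 0] by (simp add: inner_commute)
  then show "compact (cball 0 1 \<inter> {x. x \<bullet> e = 0})" by (simp add: compact_Int_closed)
  have "convex {x::'a. x \<bullet> e = 0}" using convex_hyperplane[of e 0] by (simp add: inner_commute)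
  then show "convex (cball 0 1 \<inter> {x. x \<bullet> e = 0})" by (simp add: convex_Int)
qed

lemma supp_shift:
  assumes "\<And>x. x \<in> K \<Longrightarrow> x \<bullet> e = 0"
  shows "supp K (z + t *\<^sub>R e) = supp K z"
  unfolding supp_def using assms by (intro SUP_cong) (auto simp: inner_add_right)

lemma BL_TS_sub:
  fixes e z :: "'a::euclidean_space"
  assumes "norm e = 1"
  defines "BL \<equiv> cball 0 1 \<inter> {x. x \<bullet> e = 0}"
  shows "touching_space BL z \<subseteq> {w. w \<bullet> e = 0}"
proof -
  have bd: "convex_body BL" unfolding BL_def by (rule BL_body)
  define x0 where "x0 = (SOME x. x \<in> rel_interior (supp_set BL z))"
  note g = generic[OF bd, of z, folded x0_def]
  let ?N = "normal_cone BL x0"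
  let ?T = "touching_cone BL z"
  have L: "\<And>x. x \<in> BL \<Longrightarrow> x \<bullet> e = 0" unfolding BL_def by auto
  have inN: "z + t *\<^sub>R e \<in> ?N" for t
    unfolding normal_cone_def using supp_shift[of BL e z t, OF L] g(2,3) L[OF g(2)]
    by (simp add: inner_add_right)
  have zT: "z \<in> ?T" using g(6) rel_interior_subset by blast
  have "midpoint (z - e) (z + e) = z" by (simp add: midpoint_def algebra_simps flip: scaleR_add_left)
  moreover have "z - e \<noteq> z + e" using assms by (metis add_diff_cancel_left' diff_add_cancel diff_zero
        norm_zero one_neq_zero scaleR_2 scaleR_eq_0_iff zero_neq_numeral eq_diff_eq' add_uminus_conv_diff)
  ultimately have "z \<in> open_segment (z - e) (z + e)" using midpoint_in_open_segment by metis
  moreover have "z - e \<in> ?N" using inN[of "-1"] by simp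
  moreover have "z + e \<in> ?N" using inN[of 1] by simp
  ultimately have "z - e \<in> ?T" "z + e \<in> ?T" using face_ofD[OF g(5)] zT by blast+
  then have "(z + e) - (z - e) \<in> span ?T" by (intro span_diff span_base)
  then have "(1/2) *\<^sub>R ((z + e) - (z - e)) \<in> span ?T" by (rule span_mul)
  then have "e \<in> span ?T" by (simp add: algebra_simps flip: scaleR_add_left)
  then show ?thesis unfolding touching_space_def orthogonal_comp_def orthogonal_def
    by (auto simp: inner_commute)
qed



lemma L_span_BL:
  fixes e :: "'a::euclidean_space"
  assumes "v \<bullet> e = 0"
  shows "v \<in> span (cball 0 1 \<inter> {x. x \<bullet> e = 0})"
proof (cases "v = 0")
  case True then show ?thesis by (simp add: span_zero)
next
  case False
  have "(1 / norm v) *\<^sub>R v \<in> cball 0 1 \<inter> {x. x \<bullet> e = 0}" using assms False by simp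
  then have "norm v *\<^sub>R ((1 / norm v) *\<^sub>R v) \<in> span (cball 0 1 \<inter> {x. x \<bullet> e = 0})"
    by (intro span_mul span_base)
  then show ?thesis using False by simp
qed

lemma BL_N:
  fixes e z :: "'a::euclidean_space"
  assumes "norm e = 1" "norm z = 1"
  defines "BL \<equiv> cball 0 1 \<inter> {x. x \<bullet> e = 0}"
  defines "x0 \<equiv> SOME x. x \<in> rel_interior (supp_set BL z)"
  assumes u: "x0 \<bullet> u = supp BL u" and w: "w \<bullet> e = 0" "w \<bullet> z = 0"
  shows "u \<bullet> w = 0"
proof -
  have bd: "convex_body BL" unfolding BL_def by (rule BL_body)
  note g = generic[OF bd, of z, folded x0_def]
  have L: "\<And>x. x \<in> BL \<Longrightarrow> x \<bullet> e = 0" unfolding BL_def by auto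
  have cB: "compact BL" "BL \<noteq> {}" using bd convex_body_def by auto
  have x0e: "x0 \<bullet> e = 0" using L g(2) by blast
  define q where "q = u - (u \<bullet> e) *\<^sub>R e"
  have qe: "q \<bullet> e = 0" using assms(1) unfolding q_def by (simp add: inner_diff_left dot_square_norm)
  have uq: "u = q + (u \<bullet> e) *\<^sub>R e" unfolding q_def by simp
  have "q \<bullet> u = q \<bullet> (q + (u \<bullet> e) *\<^sub>R e)" using uq by metis
  then have qu: "q \<bullet> u = q \<bullet> q" using qe by (simp add: inner_add_right inner_commute)
  have x0u: "x0 \<bullet> u = x0 \<bullet> q" using x0e by (subst uq) (simp add: inner_add_right)
  have "u \<bullet> w = (q + (u \<bullet> e) *\<^sub>R e) \<bullet> w" using uq by metis
  then have uw: "u \<bullet> w = q \<bullet> w" using w by (simp add: inner_add_left inner_commute[of e w])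
  have supq: "norm q \<le> supp BL u" if "q \<noteq> 0"
  proof -
    have "(1 / norm q) *\<^sub>R q \<in> BL" unfolding BL_def using that qe by simp
    then have "((1 / norm q) *\<^sub>R q) \<bullet> u \<le> supp BL u" using supp_upper cB by blast
    then show ?thesis using qu that by (simp add: power2_norm_eq_inner[symmetric] power2_eq_square)
  qed
  define p where "p = z - (z \<bullet> e) *\<^sub>R e"
  have pe: "p \<bullet> e = 0" using assms(1) unfolding p_def by (simp add: inner_diff_left dot_square_norm)
  have zp: "z = p + (z \<bullet> e) *\<^sub>R e" unfolding p_def by simp
  have pw: "p \<bullet> w = 0" using w by (simp add: p_def inner_diff_left inner_commute[of e w] inner_commute[of z w])
  show ?thesis
  proof (cases "p = 0")
    case True
    then have ze: "z = (z \<bullet> e) *\<^sub>R e" using zp by simp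
    have xz: "x \<bullet> z = 0" if "x \<in> BL" for x
    proof -
      have "x \<bullet> z = (z \<bullet> e) * (x \<bullet> e)" by (subst ze) (rule inner_scaleR_right)
      then show ?thesis using L[OF that] by simp
    qed
    have "supp BL z = 0"
      using supp_least[OF cB(2), of z 0] supp_upper[OF cB(1), of 0 z] xz by (auto simp: BL_def)
    then have "supp_set BL z = BL" unfolding supp_set_def using xz by auto
    then have x0r: "x0 \<in> rel_interior BL" using g(1) by simp
    show ?thesis
    proof (rule ccontr)
      assume "u \<bullet> w \<noteq> 0"
      then have q0: "q \<noteq> 0" using uw by auto
      obtain eps where eps: "eps > 0" "cball x0 eps \<inter> affine hull BL \<subseteq> BL"
        using x0r mem_rel_interior_cball by blast
      define y where "y = x0 + (eps / norm q) *\<^sub>R q"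
      have "y \<in> cball x0 eps" unfolding y_def using eps q0 by (simp add: dist_norm)
      moreover have "0 \<in> affine hull BL" by (rule hull_inc) (simp add: BL_def)
      then have "affine hull BL = span BL" by (rule affine_hull_span_0)
      moreover have "y \<bullet> e = 0" unfolding y_def using x0e qe by (simp add: inner_add_left)
      then have "y \<in> span BL" unfolding BL_def by (rule L_span_BL)
      ultimately have "y \<in> BL" using eps by blast
      then have "y \<bullet> u \<le> x0 \<bullet> u" using supp_upper[OF cB(1)] u by metis
      moreover have "y \<bullet> u = x0 \<bullet> u + (eps / norm q) * (q \<bullet> q)"
        unfolding y_def using qu by (simp add: inner_add_left)
      moreover have "q \<bullet> q > 0" using q0 by simp
      moreover have "(eps / norm q) * (q \<bullet> q) > 0" using eps q0 by simp
      ultimately show False by linarith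
    qed
  next
    case False
    have x0p: "x0 \<bullet> z = x0 \<bullet> p" using x0e by (subst zp) (simp add: inner_add_right)
    have "(1 / norm p) *\<^sub>R p \<in> BL" unfolding BL_def using False pe by simp
    then have "((1 / norm p) *\<^sub>R p) \<bullet> z \<le> supp BL z" using supp_upper cB by blast
    moreover have "((1 / norm p) *\<^sub>R p) \<bullet> z = norm p"
      using pe False by (subst zp) (simp add: inner_add_right power2_norm_eq_inner[symmetric] power2_eq_square)
    ultimately have A: "norm p \<le> x0 \<bullet> p" using g(3) x0p by simp
    have nx0: "norm x0 \<le> 1" using g(2) by (simp add: BL_def)
    have "x0 \<bullet> p \<le> norm x0 * norm p" by (rule norm_cauchy_schwarz)
    also have "\<dots> \<le> norm p" using nx0 by (simp add: mult_left_le_one_le)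
    finally have B: "x0 \<bullet> p \<le> norm p" .
    have nx1: "norm x0 = 1"
    proof (rule ccontr)
      assume "norm x0 \<noteq> 1"
      then have "norm x0 < 1" using nx0 by simp
      then have "norm x0 * norm p < norm p" using False by simp
      then show False using A norm_cauchy_schwarz[of x0 p] by linarith
    qed
    have "x0 \<bullet> p = norm x0 * norm p" using A B nx1 by simp
    then have px: "p = norm p *\<^sub>R x0" using norm_cauchy_schwarz_eq[of x0 p] nx1 by simp
    then have x0w: "x0 \<bullet> w = 0" using pw False
      by (metis inner_scaleR_left mult_eq_0_iff norm_eq_zero)
    show ?thesis
    proof (cases "q = 0")
      case True then show ?thesis using uw by simp
    next
      case q0: False
      have "norm q \<le> x0 \<bullet> q" using supq[OF q0] u x0u by simp
      moreover have "x0 \<bullet> q \<le> norm x0 * norm q" by (rule norm_cauchy_schwarz)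
      ultimately have "x0 \<bullet> q = norm x0 * norm q" using nx1 by simp
      then have "q = norm q *\<^sub>R x0" using norm_cauchy_schwarz_eq[of x0 q] nx1 by simp
      then show ?thesis using uw x0w by (metis inner_scaleR_left mult_zero_right)
    qed
  qed
qed

lemma BL_TS:
  fixes e z :: "'a::euclidean_space"
  assumes "norm e = 1" "norm z = 1"
  defines "BL \<equiv> cball 0 1 \<inter> {x. x \<bullet> e = 0}"
  shows "touching_space BL z = {w. w \<bullet> e = 0 \<and> w \<bullet> z = 0}"
proof
  have bd: "convex_body BL" unfolding BL_def by (rule BL_body)
  show "touching_space BL z \<subseteq> {w. w \<bullet> e = 0 \<and> w \<bullet> z = 0}"
    using TS_orth[OF bd, of z] BL_TS_sub[OF assms(1), of z] unfolding BL_def by blast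
  define x0 where "x0 = (SOME x. x \<in> rel_interior (supp_set BL z))"
  note g = generic[OF bd, of z, folded x0_def]
  define P where "P = {u. \<forall>w. w \<bullet> e = 0 \<and> w \<bullet> z = 0 \<longrightarrow> u \<bullet> w = 0}"
  have sP: "subspace P" unfolding P_def subspace_def by (auto simp: inner_add_left)
  have "touching_cone BL z \<subseteq> P"
  proof
    fix u assume "u \<in> touching_cone BL z"
    then have "u \<in> normal_cone BL x0" using face_of_imp_subset[OF g(5)] by blast
    then have "x0 \<bullet> u = supp BL u" unfolding normal_cone_def by simp
    then show "u \<in> P" unfolding P_def using BL_N[OF assms(1,2), of u] unfolding x0_def BL_def by blast
  qed
  then have "span (touching_cone BL z) \<subseteq> P" using span_minimal sP by blast
  then show "{w. w \<bullet> e = 0 \<and> w \<bullet> z = 0} \<subseteq> touching_space BL z"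
    unfolding touching_space_def orthogonal_comp_def orthogonal_def P_def by auto
qed



lemma orth_span: "orthogonal_comp (span X) = orthogonal_comp X"
proof
  show "orthogonal_comp (span X) \<subseteq> orthogonal_comp X"
    using span_superset unfolding orthogonal_comp_def by blast
  show "orthogonal_comp X \<subseteq> orthogonal_comp (span X)"
  proof
    fix x assume "x \<in> orthogonal_comp X"
    then have "X \<subseteq> {y. y \<bullet> x = 0}" unfolding orthogonal_comp_def orthogonal_def by auto
    then have "span X \<subseteq> {y. y \<bullet> x = 0}"
      by (rule span_minimal) (rule subspace_hyperplane2)
    then show "x \<in> orthogonal_comp (span X)" unfolding orthogonal_comp_def orthogonal_def by auto
  qed
qed

lemma dim_orth:
  fixes X :: "'a::euclidean_space set"
  shows "dim (orthogonal_comp X) = DIM('a) - dim X"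
proof -
  have "dim {y \<in> UNIV. \<forall>x \<in> span X. orthogonal x y} + dim (span X) = dim (UNIV::'a set)"
    by (rule dim_subspace_orthogonal_to_vectors) auto
  moreover have "{y \<in> UNIV. \<forall>x \<in> span X. orthogonal x y} = orthogonal_comp X"
    using orth_span[of X] unfolding orthogonal_comp_def by auto
  ultimately show ?thesis by simp
qed

lemma hyp_iff:
  fixes T :: "'a::euclidean_space set"
  shows "T \<subseteq> {x. a \<bullet> x = 0} \<longleftrightarrow> a \<in> orthogonal_comp (span T)"
proof -
  have "T \<subseteq> {x. a \<bullet> x = 0} \<longleftrightarrow> a \<in> orthogonal_comp T"
    unfolding orthogonal_comp_def orthogonal_def by (auto simp: inner_commute)
  then show ?thesis using orth_span by blast
qed

lemma dim_Inter:
  fixes a :: "nat \<Rightarrow> 'a::euclidean_space"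
  shows "dim (\<Inter>i\<in>I. {x. a i \<bullet> x = 0}) = DIM('a) - dim (a ` I)"
proof -
  have "(\<Inter>i\<in>I. {x. a i \<bullet> x = 0}) = orthogonal_comp (a ` I)"
    unfolding orthogonal_comp_def orthogonal_def by auto
  then show ?thesis using dim_orth by metis
qed

lemma ext_iff:
  fixes Ks :: "'a::euclidean_space set list"
  shows "z \<in> ext_dirs Ks \<longleftrightarrow> norm z = 1 \<and>
    (\<exists>a. (\<forall>i<length Ks. a i \<noteq> 0 \<and> a i \<in> touching_space (Ks!i) z)
        \<and> dim (a ` {..<length Ks}) = DIM('a) - 1)"
proof -
  have key: "dim (\<Inter>i\<in>{..<length Ks}. {x. a i \<bullet> x = 0}) = 1 \<longleftrightarrow> dim (a ` {..<length Ks}) = DIM('a) - 1"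
    for a :: "nat \<Rightarrow> 'a"
    using dim_Inter[of a "{..<length Ks}"] dim_subset_UNIV[of "a ` {..<length Ks}"] DIM_positive[where 'a='a]
    by linarith
  show ?thesis
  proof
    assume "z \<in> ext_dirs Ks"
    then obtain E where nz: "norm z = 1" and E: "\<forall>i<length Ks. lin_hyperplane (E i) \<and> touching_cone (Ks ! i) z \<subseteq> E i"
      and d: "dim (\<Inter>i\<in>{..<length Ks}. E i) = 1" unfolding ext_dirs_def by blast
    have "\<forall>i. \<exists>b. i < length Ks \<longrightarrow> b \<noteq> 0 \<and> E i = {x. b \<bullet> x = 0}"
      using E unfolding lin_hyperplane_def by blast
    then obtain a where a: "\<And>i. i < length Ks \<Longrightarrow> a i \<noteq> 0 \<and> E i = {x. a i \<bullet> x = 0}"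
      by (metis (no_types))
    have "(\<Inter>i\<in>{..<length Ks}. E i) = (\<Inter>i\<in>{..<length Ks}. {x. a i \<bullet> x = 0})" using a by auto
    then have "dim (a ` {..<length Ks}) = DIM('a) - 1" using d key by simp
    moreover have "\<forall>i<length Ks. a i \<noteq> 0 \<and> a i \<in> touching_space (Ks!i) z"
    proof (intro allI impI conjI)
      fix i assume i: "i < length Ks"
      show "a i \<noteq> 0" using a[OF i] by simp
      have "touching_cone (Ks ! i) z \<subseteq> {x. a i \<bullet> x = 0}" using a[OF i] E i by auto
      then show "a i \<in> touching_space (Ks!i) z" unfolding touching_space_def using hyp_iff by blast
    qed
    ultimately show "norm z = 1 \<and> (\<exists>a. (\<forall>i<length Ks. a i \<noteq> 0 \<and> a i \<in> touching_space (Ks!i) z)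
        \<and> dim (a ` {..<length Ks}) = DIM('a) - 1)" using nz by blast
  next
    assume "norm z = 1 \<and> (\<exists>a. (\<forall>i<length Ks. a i \<noteq> 0 \<and> a i \<in> touching_space (Ks!i) z)
        \<and> dim (a ` {..<length Ks}) = DIM('a) - 1)"
    then obtain a where nz: "norm z = 1" and a: "\<forall>i<length Ks. a i \<noteq> 0 \<and> a i \<in> touching_space (Ks!i) z"
      and d: "dim (a ` {..<length Ks}) = DIM('a) - 1" by blast
    define E where "E i = {x. a i \<bullet> x = 0}" for i
    have "\<forall>i<length Ks. lin_hyperplane (E i) \<and> touching_cone (Ks ! i) z \<subseteq> E i"
      using a hyp_iff unfolding E_def lin_hyperplane_def touching_space_def by blast
    moreover have "dim (\<Inter>i\<in>{..<length Ks}. E i) = 1" using d key unfolding E_def by simp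
    ultimately show "z \<in> ext_dirs Ks" unfolding ext_dirs_def using nz by blast
  qed
qed

lemma dim_W:
  fixes e z :: "'a::euclidean_space"
  assumes "norm e = 1" "norm z = 1"
  shows "dim {w. w \<bullet> e = 0 \<and> w \<bullet> z = 0} = (if z \<in> {e, -e} then DIM('a) - 1 else DIM('a) - 2)"
proof -
  have "{w. w \<bullet> e = 0 \<and> w \<bullet> z = 0} = orthogonal_comp {e, z}"
    unfolding orthogonal_comp_def orthogonal_def by (auto simp: inner_commute)
  then have 1: "dim {w. w \<bullet> e = 0 \<and> w \<bullet> z = 0} = DIM('a) - dim {e, z}" using dim_orth by metis
  have e0: "e \<noteq> 0" using assms by auto
  have "z \<in> span {e} \<longleftrightarrow> z \<in> {e, -e}"
  proof
    assume "z \<in> span {e}"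
    then obtain k where zk: "z = k *\<^sub>R e" by (auto simp: span_singleton)
    then have "\<bar>k\<bar> = 1" using assms by simp
    then have "k = 1 \<or> k = -1" by linarith
    then show "z \<in> {e, -e}" using zk by auto
  next
    assume "z \<in> {e, -e}" then show "z \<in> span {e}"
      by (auto intro: span_base span_neg)
  qed
  moreover have "dim {e, z} = dim (insert z {e})" by (simp add: insert_commute)
  ultimately have "dim {e, z} = (if z \<in> {e, -e} then 1 else 2)"
    using dim_insert[of z "{e}"] e0 by simp
  then show ?thesis using 1 by simp
qed

lemma dim_Un_card:
  fixes A1 A2 :: "'a::euclidean_space set"
  assumes "finite A2"
  shows "dim (A1 \<union> A2) \<le> dim A1 + card A2"
proof -
  obtain B where B: "B \<subseteq> A1" "independent B" "A1 \<subseteq> span B" "card B = dim A1"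
    using basis_exists by blast
  have fB: "finite B" using B(2) independent_bound by blast
  have "A1 \<union> A2 \<subseteq> span (B \<union> A2)" using B(3) span_mono[of B "B \<union> A2"] span_superset[of "B \<union> A2"] by blast
  then have "dim (A1 \<union> A2) \<le> card (B \<union> A2)" using dim_le_card fB assms by blast
  also have "\<dots> \<le> card B + card A2" by (rule card_Un_le)
  finally show ?thesis using B(4) by simp
qed

lemma suff:
  fixes S W :: "'a::euclidean_space set"
  assumes "B' \<subseteq> S" "independent B'" "card B' = j" "j \<le> m" "m \<le> dim (B' \<union> W)"
  shows "\<exists>a. (\<forall>i<j. a i \<in> S \<and> a i \<noteq> 0) \<and> (\<forall>i. j \<le> i \<and> i < m \<longrightarrow> a i \<in> W \<and> a i \<noteq> 0)
             \<and> dim (a ` {..<m}) = m"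
proof -
  obtain C where C: "B' \<subseteq> C" "C \<subseteq> B' \<union> W" "independent C" "B' \<union> W \<subseteq> span C"
    using maximal_independent_subset_extend[of B' "B' \<union> W"] assms(2) by blast
  have fC: "finite C" using C(3) independent_bound by blast
  have fB: "finite B'" using assms(2) independent_bound by blast
  have "dim (B' \<union> W) \<le> card C"
    using dim_le_card[OF C(4) fC] .
  then have "m \<le> card C" using assms(5) by simp
  moreover have "card (C - B') = card C - j" using card_Diff_subset[OF fB C(1)] assms(3) by simp
  ultimately have "m - j \<le> card (C - B')" by simp
  then obtain D where D: "D \<subseteq> C - B'" "card D = m - j" "finite D"
    by (rule obtain_subset_with_card_n)
  have "card {..<j} = card B'" using assms(3) by simp
  then obtain f where f: "bij_betw f {..<j} B'" using bij_betw_iff_card[OF finite_lessThan fB] by blast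
  have "card {j..<m} = card D" using D(2) by simp
  then obtain g where g: "bij_betw g {j..<m} D" using bij_betw_iff_card[OF finite_atLeastLessThan D(3)] by blast
  define a where "a i = (if i < j then f i else g i)" for i
  have "a ` {..<j} = f ` {..<j}" by (rule image_cong) (auto simp: a_def)
  then have aj: "a ` {..<j} = B'" using f unfolding bij_betw_def by simp
  have "a ` {j..<m} = g ` {j..<m}" by (rule image_cong) (auto simp: a_def)
  then have ajm: "a ` {j..<m} = D" using g unfolding bij_betw_def by simp
  have "{..<m} = {..<j} \<union> {j..<m}" using assms(4) by auto
  then have am: "a ` {..<m} = B' \<union> D" using aj ajm by (simp add: image_Un)
  have indC: "independent (B' \<union> D)" using C(1,3) D(1) independent_mono by blast
  have "B' \<inter> D = {}" using D(1) by auto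
  then have "card (B' \<union> D) = card B' + card D" using fB D(3) by (rule card_Un_disjoint[rotated 2])
  then have "card (B' \<union> D) = m" using D(2) assms(3,4) by simp
  then have dm: "dim (a ` {..<m}) = m" using am dim_eq_card_independent[OF indC] by simp
  have nz: "0 \<notin> B' \<union> D" using indC dependent_zero by blast
  have "\<forall>i<j. a i \<in> S \<and> a i \<noteq> 0"
  proof (intro allI impI)
    fix i assume "i < j"
    then have "a i \<in> B'" using aj by blast
    then show "a i \<in> S \<and> a i \<noteq> 0" using assms(1) nz by (metis UnI1 subsetD)
  qed
  moreover have "\<forall>i. j \<le> i \<and> i < m \<longrightarrow> a i \<in> W \<and> a i \<noteq> 0"
  proof (intro allI impI)
    fix i assume "j \<le> i \<and> i < m"
    then have "i \<in> {j..<m}" by simp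
    then have "a i \<in> D" using ajm by blast
    then show "a i \<in> W \<and> a i \<noteq> 0" using D(1) C(2) nz by (metis DiffE UnE UnI2 subsetD)
  qed
  ultimately show ?thesis using dm by blast
qed



lemma main_claim:
  fixes K :: "'a::euclidean_space set" and e z :: 'a and j :: nat
  assumes n3: "DIM('a) \<ge> 3" and ne: "norm e = 1" and nz: "norm z = 1"
    and j1: "1 \<le> j" and j2: "j \<le> DIM('a) - 2"
    and bK: "convex_body K"
  defines "BL \<equiv> cball (0::'a) 1 \<inter> {x::'a. x \<bullet> e = 0}"
  shows "z \<in> ext_dirs (replicate j K @ replicate (DIM('a) - 1 - j) BL)
     \<longleftrightarrow> j \<le> dim (touching_space K z) \<and> (z \<notin> {e, -e} \<longrightarrow> \<not> touching_space K z \<subseteq> {x. x \<bullet> e = 0})"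
proof -
  define m where "m = DIM('a) - 1"
  define Ks where "Ks = replicate j K @ replicate (DIM('a) - 1 - j) BL"
  define S where "S = touching_space K z"
  define W where "W = {w::'a. w \<bullet> e = 0 \<and> w \<bullet> z = 0}"
  have lenK: "length Ks = m" unfolding Ks_def m_def using j2 by simp
  have jm: "j \<le> m" unfolding m_def using j2 by simp
  have TSi: "touching_space (Ks ! i) z = (if i < j then S else W)" if "i < m" for i
  proof (cases "i < j")
    case True then show ?thesis unfolding Ks_def S_def by (simp add: nth_append)
  next
    case False
    then have "Ks ! i = BL" unfolding Ks_def using that m_def by (simp add: nth_append)
    then show ?thesis using False BL_TS[OF ne nz] unfolding BL_def W_def by simp
  qed
  have ext: "z \<in> ext_dirs Ks \<longleftrightarrow> (\<exists>a. (\<forall>i<m. a i \<noteq> 0 \<and> a i \<in> (if i < j then S else W))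
        \<and> dim (a ` {..<m}) = m)"
    unfolding ext_iff lenK using nz TSi m_def by (auto simp del: One_nat_def)
  have Sz: "S \<subseteq> {w. w \<bullet> z = 0}" unfolding S_def by (rule TS_orth[OF bK])
  have sW: "subspace W" unfolding W_def subspace_def by (auto simp: inner_add_left)
  have dW: "dim W = (if z \<in> {e, -e} then DIM('a) - 1 else DIM('a) - 2)"
    unfolding W_def by (rule dim_W[OF ne nz])
  have "z \<in> ext_dirs Ks \<longleftrightarrow> j \<le> dim S \<and> (z \<notin> {e, -e} \<longrightarrow> \<not> S \<subseteq> {x. x \<bullet> e = 0})"
  proof
    assume "z \<in> ext_dirs Ks"
    then obtain a where a: "\<forall>i<m. a i \<noteq> 0 \<and> a i \<in> (if i < j then S else W)"
      and d: "dim (a ` {..<m}) = m" using ext by blast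
    have "{..<m} = {..<j} \<union> {j..<m}" using jm by auto
    then have "a ` {..<m} = a ` {..<j} \<union> a ` {j..<m}" by (simp add: image_Un)
    then have "m \<le> dim (a ` {..<j}) + card (a ` {j..<m})" using d dim_Un_card[of "a ` {j..<m}" "a ` {..<j}"] by simp
    moreover have "card (a ` {j..<m}) \<le> m - j" using card_image_le[of "{j..<m}" a] by simp
    ultimately have "j \<le> dim (a ` {..<j})" using jm by linarith
    moreover have "a ` {..<j} \<subseteq> S"
    proof
      fix y assume "y \<in> a ` {..<j}"
      then obtain i where i: "i < j" "y = a i" by auto
      then have "i < m" using jm by simp
      then show "y \<in> S" using a i by auto
    qed
    then have "dim (a ` {..<j}) \<le> dim S" by (rule dim_subset)
    ultimately have dS: "j \<le> dim S" by linarith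
    moreover have "\<not> S \<subseteq> {x. x \<bullet> e = 0}" if zn: "z \<notin> {e, -e}"
    proof
      assume SL: "S \<subseteq> {x. x \<bullet> e = 0}"
      have "a ` {..<m} \<subseteq> W"
      proof
        fix y assume "y \<in> a ` {..<m}"
        then obtain i where i: "i < m" "y = a i" by auto
        show "y \<in> W"
        proof (cases "i < j")
          case True then have "y \<in> S" using a i by auto
          then show ?thesis using SL Sz unfolding W_def by auto
        next
          case False then show ?thesis using a i by auto
        qed
      qed
      then have "dim (a ` {..<m}) \<le> dim W" by (rule dim_subset)
      then show False using d dW zn n3 m_def by simp
    qed
    ultimately show "j \<le> dim S \<and> (z \<notin> {e, -e} \<longrightarrow> \<not> S \<subseteq> {x. x \<bullet> e = 0})" by blast
  next
    assume R: "j \<le> dim S \<and> (z \<notin> {e, -e} \<longrightarrow> \<not> S \<subseteq> {x. x \<bullet> e = 0})"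
    have "\<exists>B'. B' \<subseteq> S \<and> independent B' \<and> card B' = j \<and> m \<le> dim (B' \<union> W)"
    proof (cases "z \<in> {e, -e}")
      case True
      obtain B where B: "B \<subseteq> S" "independent B" "S \<subseteq> span B" "card B = dim S"
        using basis_exists by blast
      then obtain B' where B': "B' \<subseteq> B" "card B' = j" using R obtain_subset_with_card_n by metis
      have "m \<le> dim (B' \<union> W)" using dim_subset[of W "B' \<union> W"] dW True m_def by simp
      then show ?thesis using B B' independent_mono by blast
    next
      case False
      then obtain v where v: "v \<in> S" "v \<bullet> e \<noteq> 0" using R by auto
      have "v \<noteq> 0" using v by auto
      then have iv: "independent {v}" using independent_insertI[of v "{}"] by simp
      obtain B where B: "{v} \<subseteq> B" "B \<subseteq> S" "independent B" "S \<subseteq> span B"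
        using maximal_independent_subset_extend[of "{v}" S] iv v by blast
      have fB: "finite B" using B(3) independent_bound by blast
      have "dim S \<le> card B" using dim_le_card[OF B(4) fB] .
      then have "j \<le> card B" using R by linarith
      then have "j - 1 \<le> card (B - {v})" using B(1) fB by (simp add: card_Diff_singleton)
      then obtain D where D: "D \<subseteq> B - {v}" "card D = j - 1" "finite D"
        by (rule obtain_subset_with_card_n)
      define B' where "B' = insert v D"
      have "v \<notin> D" using D(1) by auto
      then have cB': "card B' = j" unfolding B'_def using D j1 by simp
      have sB': "B' \<subseteq> B" unfolding B'_def using D B(1) by auto
      have "span W = W" using sW by (rule span_eq_iff[THEN iffD2])
      moreover have "v \<notin> W" using v unfolding W_def by simp
      ultimately have "v \<notin> span W" by metis
      then have "dim (insert v W) = dim W + 1" by (simp add: dim_insert)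
      moreover have "dim (insert v W) \<le> dim (B' \<union> W)" by (rule dim_subset) (auto simp: B'_def)
      ultimately have "m \<le> dim (B' \<union> W)" using dW False n3 m_def by simp
      then show ?thesis using sB' B(2,3) cB' independent_mono by blast
    qed
    then obtain B' where hB: "B' \<subseteq> S" "independent B'" "card B' = j" "m \<le> dim (B' \<union> W)" by blast
    from suff[OF hB(1,2,3) jm hB(4)] obtain a where
      a: "(\<forall>i<j. a i \<in> S \<and> a i \<noteq> 0)" "(\<forall>i. j \<le> i \<and> i < m \<longrightarrow> a i \<in> W \<and> a i \<noteq> 0)"
        "dim (a ` {..<m}) = m" by blast
    have "\<forall>i<m. a i \<noteq> 0 \<and> a i \<in> (if i < j then S else W)"
    proof (intro allI impI)
      fix i assume "i < m"
      then show "a i \<noteq> 0 \<and> a i \<in> (if i < j then S else W)" using a(1,2) by (cases "i < j") auto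
    qed
    then show "z \<in> ext_dirs Ks" using ext a(3) by blast
  qed
  then show ?thesis unfolding Ks_def S_def .
qed

theorem lemma3p9:
  fixes K :: "'a::euclidean_space set" and e :: 'a and j :: nat
  assumes "DIM('a) \<ge> 3" and "e \<in> Basis"
    and "1 \<le> j" and "j \<le> DIM('a) - 2"
    and "convex_body K"
  defines "L \<equiv> {x::'a. x \<bullet> e = 0}"
  defines "BL \<equiv> cball (0::'a) 1 \<inter> L"
  shows "(\<forall>z\<in>{e, -e}.
            z \<in> ext_dirs (replicate j K @ replicate (DIM('a) - 1 - j) BL)
            \<longleftrightarrow> dim (touching_space K z) \<ge> j)
       \<and> (\<forall>z\<in>sphere 0 1 - {e, -e}.
            z \<in> ext_dirs (replicate j K @ replicate (DIM('a) - 1 - j) BL)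
            \<longleftrightarrow> dim (touching_space K z) \<ge> j \<and> \<not> touching_space K z \<subseteq> L)"
proof -
  have ne: "norm e = 1" using assms(2) by simp
  note mc = main_claim[OF assms(1) ne _ assms(3,4,5)]
  show ?thesis
  proof (intro conjI ballI)
    fix z assume z: "z \<in> {e, -e}"
    then have "norm z = 1" using ne by auto
    then show "z \<in> ext_dirs (replicate j K @ replicate (DIM('a) - 1 - j) BL)
            \<longleftrightarrow> dim (touching_space K z) \<ge> j"
      using mc[of z] z unfolding BL_def L_def by auto
  next
    fix z assume z: "z \<in> sphere 0 1 - {e, -e}"
    then have "norm z = 1" by simp
    then show "z \<in> ext_dirs (replicate j K @ replicate (DIM('a) - 1 - j) BL)
            \<longleftrightarrow> dim (touching_space K z) \<ge> j \<and> \<not> touching_space K z \<subseteq> L"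
      using mc[of z] z unfolding BL_def L_def by simp
  qed
qed


end
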